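(* Let $N\ge2$ and $T,\mu>0$. Let $x(t)=(x_1(t),\dots,x_N(t))$, $x_i(t)\in\mathbb{R}$, be a (Carathéodory) solution of $$\dot x_i(t)=\frac1N\sum_{j=1}^N M_{ij}(t)(x_j-x_i),\qquad i=1,\dots,N,$$ with Lebesgue measurable $M_{ij}:[0,+\infty)\to[0,1]$, and let $\alpha:=\min_{j}x_j(0)$. Let $k\ge1$ and assume that the $(T,\mu)$-connectivity graph $G(t)$ contains the directed path $i_0\to i_1\to\dots\to i_k$ for all times $t=0,T,\dots,(k-1)T$. Then for all $t\ge kT$ and all $l\in\{0,\dots,k\}$, $$x_{i_l}(t)\ge\alpha+\eta^k\exp\!\left(-2\tfrac{N-1}{N}t\right)(x_{i_k}(0)-\alpha),\qquad \eta:=\frac{\mu T}{N+\mu T}.$$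
   Context: Given $T,\mu>0$, the $(T,\mu)$-connectivity graph at time $t\ge0$ is the directed graph $G(t)$ on nodes $\{1,\dots,N\}$ in which the arrow $i\to j$ exists iff $\frac1T\int_t^{t+T}M_{ij}(s)\,ds\ge\mu$. *)

theory Defs
  imports "HOL-Analysis.Analysis"
begin

definition conn_arrow :: "real \<Rightarrow> real \<Rightarrow> (nat \<Rightarrow> nat \<Rightarrow> real \<Rightarrow> real) \<Rightarrow> real \<Rightarrow> nat \<Rightarrow> nat \<Rightarrow> bool"
  where "conn_arrow T \<mu> M t i j \<longleftrightarrow> (1 / T) * integral {t..t+T} (M i j) \<ge> \<mu>"

definition carath_solution :: "nat \<Rightarrow> (nat \<Rightarrow> nat \<Rightarrow> real \<Rightarrow> real) \<Rightarrow> (nat \<Rightarrow> real \<Rightarrow> real) \<Rightarrow> bool"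
  where "carath_solution N M x \<longleftrightarrow>
    (\<forall>i\<in>{1..N}. \<forall>t\<ge>0.
      ((\<lambda>s. (1 / real N) * (\<Sum>j=1..N. M i j s * (x j s - x i s))) has_integral (x i t - x i 0)) {0..t})"

end

theory Submission
  imports Defs
begin

lemma mono_local:
  fixes F :: "real \<Rightarrow> real"
  assumes ab: "a \<le> b" and cont: "continuous_on {a..b} F"
    and loc: "\<And>s e. a \<le> s \<Longrightarrow> s < b \<Longrightarrow> e > 0 \<Longrightarrow>
       eventually (\<lambda>t. t \<le> b \<longrightarrow> F s - e * (t - s) \<le> F t) (at_right s)"
  shows "F a \<le> F b"
proof -
  have main: "F a - e * (b - a) \<le> F b" if e: "e > 0" for e
  proof -
    define S where "S = {t \<in> {a..b}. F a - e * (t - a) \<le> F t}"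
    have cl: "closed S" unfolding S_def
      by (intro continuous_on_closed_Collect_le cont) (auto intro!: continuous_intros)
    have aS: "a \<in> S" using ab by (simp add: S_def)
    have bdd: "bdd_above S" by (auto simp: S_def bdd_above_def)
    define \<tau> where "\<tau> = Sup S"
    have tS: "\<tau> \<in> S" unfolding \<tau>_def using closed_contains_Sup[OF _ bdd cl] aS by blast
    have "\<tau> = b"
    proof (rule ccontr)
      assume "\<tau> \<noteq> b"
      with tS have tb: "\<tau> < b" and at: "a \<le> \<tau>" by (auto simp: S_def)
      from loc[OF at tb e] obtain d where d: "d > \<tau>"
        and dd: "\<And>y. y > \<tau> \<Longrightarrow> y < d \<Longrightarrow> y \<le> b \<longrightarrow> F \<tau> - e * (y - \<tau>) \<le> F y"
        unfolding eventually_at_right_field by blast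
      define t where "t = min b ((\<tau> + d) / 2)"
      have t1: "\<tau> < t" "t < d" "t \<le> b" using d tb by (auto simp: t_def min_def)
      have "F \<tau> - e * (t - \<tau>) \<le> F t" using dd t1 by blast
      moreover have "F a - e * (\<tau> - a) \<le> F \<tau>" using tS by (simp add: S_def)
      ultimately have "t \<in> S" using t1 at by (auto simp: S_def algebra_simps)
      hence "t \<le> \<tau>" unfolding \<tau>_def using bdd by (simp add: cSup_upper)
      thus False using t1 by simp
    qed
    thus ?thesis using tS by (simp add: S_def)
  qed
  show ?thesis
  proof (cases "a = b")
    case True thus ?thesis by simp
  next
    case False
    hence ba: "b - a > 0" using ab by simp
    show ?thesis
    proof (rule ccontr)
      assume "\<not> ?thesis"
      hence pos: "F a - F b > 0" by simp
      define e where "e = (F a - F b) / (2 * (b - a))"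
      have "e > 0" using pos ba by (simp add: e_def)
      from main[OF this] have "F a - F b \<le> e * (b - a)" by simp
      also have "e * (b - a) = (F a - F b) / 2" using ba by (simp add: e_def field_simps)
      finally show False using pos by simp
    qed
  qed
qed


lemma cont_from_pt:
  fixes g :: "real \<Rightarrow> real"
  assumes "\<And>s e. a \<le> s \<Longrightarrow> s \<le> b \<Longrightarrow> e > 0 \<Longrightarrow> \<exists>d>0. \<forall>r\<in>{a..b}. \<bar>r - s\<bar> < d \<longrightarrow> \<bar>g r - g s\<bar> < e"
  shows "continuous_on {a..b} g"
  unfolding continuous_on_iff dist_real_def using assms by auto

lemma comparison:
  fixes g q w :: "real \<Rightarrow> real" and a b c :: real
  assumes ab: "a \<le> b" and c0: "c \<ge> 0"
    and gint: "\<And>s t. a \<le> s \<Longrightarrow> s \<le> t \<Longrightarrow> t \<le> b \<Longrightarrow> (q has_integral (g t - g s)) {s..t}"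
    and gcont: "\<And>s e. a \<le> s \<Longrightarrow> s \<le> b \<Longrightarrow> e > 0 \<Longrightarrow> \<exists>d>0. \<forall>r\<in>{a..b}. \<bar>r - s\<bar> < d \<longrightarrow> \<bar>g r - g s\<bar> < e"
    and gnn: "\<And>r. a \<le> r \<Longrightarrow> r \<le> b \<Longrightarrow> g r \<ge> 0"
    and wint: "w integrable_on {a..b}"
    and wnn: "\<And>r. a \<le> r \<Longrightarrow> r \<le> b \<Longrightarrow> w r \<ge> 0"
    and qge: "\<And>r. a \<le> r \<Longrightarrow> r \<le> b \<Longrightarrow> q r \<ge> - c * g r + w r"
  shows "exp (c * b) * g b \<ge> exp (c * a) * g a + exp (c * a) * integral {a..b} w"
proof -
  have gc: "continuous_on {a..b} g" by (rule cont_from_pt[OF gcont])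
  define F where "F t = exp (c * t) * g t - exp (c * a) * integral {a..t} w" for t
  have Fc: "continuous_on {a..b} F" unfolding F_def
    by (intro continuous_intros gc indefinite_integral_continuous_1 wint)
  have "F a \<le> F b"
  proof (rule mono_local[OF ab Fc])
    fix s e :: real assume as: "a \<le> s" and sb: "s < b" and e: "e > 0"
    define K where "K = c * (g s + exp (c * s) + 1)"
    have K0: "K \<ge> 0" using c0 gnn[of s] as sb by (simp add: K_def)
    define \<epsilon> where "\<epsilon> = min 1 (e / (K + 1))"
    have \<epsilon>0: "\<epsilon> > 0" using e K0 by (simp add: \<epsilon>_def)
    have \<epsilon>1: "\<epsilon> \<le> 1" by (simp add: \<epsilon>_def)
    have \<epsilon>K: "\<epsilon> * K \<le> e"
    proof -
      have "\<epsilon> * K \<le> e / (K + 1) * K" using K0 by (intro mult_right_mono) (auto simp: \<epsilon>_def)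
      also have "\<dots> \<le> e" using K0 e by (simp add: field_simps)
      finally show ?thesis .
    qed
    obtain d where d0: "d > 0" and dg: "\<forall>r\<in>{a..b}. \<bar>r - s\<bar> < d \<longrightarrow> \<bar>g r - g s\<bar> < \<epsilon>"
      using gcont[OF as _ \<epsilon>0] sb by auto
    have "isCont (\<lambda>t. exp (c * t)) s" by (intro continuous_intros)
    hence "((\<lambda>t. exp (c * t)) \<longlongrightarrow> exp (c * s)) (at_right s)"
      by (simp add: isCont_def filterlim_at_split)
    hence ev1: "eventually (\<lambda>t. dist (exp (c * t)) (exp (c * s)) < \<epsilon>) (at_right s)"
      using \<epsilon>0 by (simp add: tendsto_iff)
    have ev2: "eventually (\<lambda>t. t < s + d) (at_right s)"
      unfolding eventually_at_right_field using d0 by (intro exI[of _ "s + d"]) auto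
    have ev3: "eventually (\<lambda>t. t > s) (at_right s)"
      by (simp add: eventually_at_right_less)
    show "eventually (\<lambda>t. t \<le> b \<longrightarrow> F s - e * (t - s) \<le> F t) (at_right s)"
      using ev1 ev2 ev3
    proof eventually_elim
      case (elim t)
      show ?case
      proof
        assume tb: "t \<le> b"
        have st: "s < t" using elim by simp
        define \<Delta> where "\<Delta> = t - s"
        have D0: "\<Delta> > 0" using st by (simp add: \<Delta>_def)
        have wst: "w integrable_on {s..t}" using integrable_subinterval_real[OF wint] as tb by auto
        have gst: "g integrable_on {s..t}"
          by (rule integrable_continuous_real, rule continuous_on_subset[OF gc]) (use as tb in auto)
        define G where "G = integral {s..t} g"
        define I where "I = integral {s..t} w"
        have I0: "I \<ge> 0" unfolding I_def
          by (rule integral_nonneg[OF wst]) (use wnn as tb in auto)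
        have h1: "((\<lambda>r. - c * g r) has_integral (- c * G)) {s..t}"
          unfolding G_def by (rule has_integral_mult_right[OF integrable_integral[OF gst]])
        have h2: "(w has_integral I) {s..t}" unfolding I_def by (rule integrable_integral[OF wst])
        have h3: "((\<lambda>r. - c * g r + w r) has_integral (- c * G + I)) {s..t}"
          by (rule has_integral_add[OF h1 h2])
        have gt: "g t - g s \<ge> - c * G + I"
          by (rule has_integral_le[OF h3 gint[of s t]]) (use as st tb qge in auto)
        have "G \<le> integral {s..t} (\<lambda>r. g s + \<epsilon>)" unfolding G_def
        proof (rule integral_le[OF gst])
          show "(\<lambda>r. g s + \<epsilon>) integrable_on {s..t}" by (intro integrable_continuous_real continuous_intros)
          fix r assume "r \<in> {s..t}"
          hence "\<bar>g r - g s\<bar> < \<epsilon>" using dg as tb elim by auto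
          thus "g r \<le> g s + \<epsilon>" by simp
        qed
        hence GD: "G \<le> \<Delta> * (g s + \<epsilon>)" using st by (simp add: \<Delta>_def)
        have Iw: "integral {a..t} w = integral {a..s} w + I"
          unfolding I_def
          using Henstock_Kurzweil_Integration.integral_combine[of a s t w] as st
            integrable_subinterval_real[OF wint, of a t] tb by auto
        have gs0: "g s \<ge> 0" using gnn as sb by simp
        have et: "exp (c * t) = exp (c * s) * exp (c * \<Delta>)"
          unfolding exp_add[symmetric] \<Delta>_def by (simp add: algebra_simps)
        have "exp (c * s) * (1 + c * \<Delta>) \<le> exp (c * s) * exp (c * \<Delta>)"
          by (rule mult_left_mono[OF exp_ge_add_one_self]) simp
        hence eD: "exp (c * t) - exp (c * s) \<ge> c * \<Delta> * exp (c * s)"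
          unfolding et by (simp add: algebra_simps)
        have "c * a \<le> c * t" using c0 as st by (intro mult_left_mono) auto
        hence eta: "exp (c * t) \<ge> exp (c * a)" by simp
        have eclose: "exp (c * t) - exp (c * s) \<le> \<epsilon>" using elim by (simp add: dist_real_def)
        have eqF: "F t - F s = (exp (c * t) - exp (c * s)) * g s + exp (c * t) * (g t - g s) - exp (c * a) * I"
          unfolding F_def Iw by (simp add: algebra_simps)
        have "exp (c * t) * (- c * G + I) \<le> exp (c * t) * (g t - g s)"
          using gt by (simp add: mult_left_mono)
        hence s1: "F t - F s \<ge> (exp (c * t) - exp (c * s)) * g s - c * exp (c * t) * G
            + (exp (c * t) - exp (c * a)) * I" unfolding eqF by (simp add: algebra_simps)
        have "(exp (c * t) - exp (c * a)) * I \<ge> 0" using eta I0 by simp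
        moreover have "c * exp (c * t) * G \<le> c * exp (c * t) * (\<Delta> * (g s + \<epsilon>))"
          using GD c0 by (simp add: mult_left_mono)
        moreover have "(exp (c * t) - exp (c * s)) * g s \<ge> c * \<Delta> * exp (c * s) * g s"
          using eD gs0 by (simp add: mult_right_mono)
        ultimately have s2: "F t - F s \<ge> c * \<Delta> * exp (c * s) * g s - c * exp (c * t) * (\<Delta> * (g s + \<epsilon>))"
          using s1 by linarith
        have eq2: "c * \<Delta> * exp (c * s) * g s - c * exp (c * t) * (\<Delta> * (g s + \<epsilon>))
            = - (c * \<Delta> * ((exp (c * t) - exp (c * s)) * g s + exp (c * t) * \<epsilon>))"
          by (simp add: algebra_simps)
        have A: "(exp (c * t) - exp (c * s)) * g s \<le> \<epsilon> * g s"
          using eclose gs0 by (rule mult_right_mono)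
        have B: "exp (c * t) * \<epsilon> \<le> (exp (c * s) + 1) * \<epsilon>"
          using eclose \<epsilon>1 \<epsilon>0 by (intro mult_right_mono) auto
        have "(exp (c * t) - exp (c * s)) * g s + exp (c * t) * \<epsilon> \<le> \<epsilon> * (g s + exp (c * s) + 1)"
          using A B by (simp add: algebra_simps)
        hence "(c * \<Delta>) * ((exp (c * t) - exp (c * s)) * g s + exp (c * t) * \<epsilon>)
              \<le> (c * \<Delta>) * (\<epsilon> * (g s + exp (c * s) + 1))"
          using c0 D0 by (intro mult_left_mono) auto
        moreover have "(c * \<Delta>) * (\<epsilon> * (g s + exp (c * s) + 1)) = \<Delta> * (\<epsilon> * K)"
          by (simp add: K_def algebra_simps)
        moreover have "\<Delta> * (\<epsilon> * K) \<le> \<Delta> * e" using \<epsilon>K D0 by (intro mult_left_mono) auto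
        ultimately have "F t - F s \<ge> - (\<Delta> * e)" using s2 eq2 by linarith
        thus "F s - e * (t - s) \<le> F t" by (simp add: \<Delta>_def algebra_simps)
      qed
    qed
  qed
  thus ?thesis by (simp add: F_def algebra_simps)
qed


lemma sum_drop_self:
  fixes Mr v :: "nat \<Rightarrow> real"
  assumes "j \<in> {1..N}"
  shows "(\<Sum>l=1..N. Mr l * (v l - v j)) = (\<Sum>l\<in>{1..N}-{j}. Mr l * (v l - v j))"
  using sum.remove[of "{1..N}" j "\<lambda>l. Mr l * (v l - v j)"] assms by simp

lemma card_minus1: "j \<in> {1..N} \<Longrightarrow> real (card ({1..N} - {j})) = real N - 1"
  by (simp add: card_Diff_singleton of_nat_diff)

lemma qlow1:
  fixes N :: nat and Mr v :: "nat \<Rightarrow> real"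
  assumes N1: "N \<ge> 1" and j: "j \<in> {1..N}"
    and Mb: "\<And>l. l \<in> {1..N} \<Longrightarrow> 0 \<le> Mr l \<and> Mr l \<le> 1"
  shows "(1 / real N) * (\<Sum>l=1..N. Mr l * (v l - v j)) \<ge> - ((real N - 1) / real N) * (v j - Min (v ` {1..N}))"
proof -
  have Npos: "real N > 0" using N1 by simp
  define m where "m = Min (v ` {1..N})"
  have mle: "\<And>l. l \<in> {1..N} \<Longrightarrow> m \<le> v l" unfolding m_def by (intro Min_le) auto
  have each: "m - v j \<le> Mr l * (v l - v j)" if l: "l \<in> {1..N} - {j}" for l
  proof (cases "v l - v j \<ge> 0")
    case True
    hence "0 \<le> Mr l * (v l - v j)" using Mb l by simp
    moreover have "m - v j \<le> 0" using mle j by simp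
    ultimately show ?thesis by linarith
  next
    case False
    have "(1 - Mr l) * (v l - v j) \<le> 0" using Mb l False by (intro mult_nonneg_nonpos) auto
    hence "v l - v j \<le> Mr l * (v l - v j)" by (simp add: algebra_simps)
    moreover have "m - v j \<le> v l - v j" using mle l by simp
    ultimately show ?thesis by linarith
  qed
  have "(\<Sum>l\<in>{1..N}-{j}. m - v j) \<le> (\<Sum>l\<in>{1..N}-{j}. Mr l * (v l - v j))"
    by (rule sum_mono) (rule each)
  hence S: "(real N - 1) * (m - v j) \<le> (\<Sum>l=1..N. Mr l * (v l - v j))"
    using card_minus1[OF j] sum_drop_self[OF j, of Mr v] by simp
  have "- ((real N - 1) / real N) * (v j - m) = (1 / real N) * ((real N - 1) * (m - v j))"
    using Npos by (simp add: field_simps)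
  also have "\<dots> \<le> (1 / real N) * (\<Sum>l=1..N. Mr l * (v l - v j))"
    using S Npos by (intro mult_left_mono) auto
  finally show ?thesis by (simp add: m_def)
qed

lemma qlow2:
  fixes N :: nat and Mr v :: "nat \<Rightarrow> real"
  assumes N1: "N \<ge> 1" and i: "i \<in> {1..N}" and j: "j \<in> {1..N}" and ij: "i \<noteq> j"
    and Mb: "\<And>l. l \<in> {1..N} \<Longrightarrow> 0 \<le> Mr l \<and> Mr l \<le> 1"
    and va: "\<And>l. l \<in> {1..N} \<Longrightarrow> v l \<ge> \<alpha>"
  shows "(1 / real N) * (\<Sum>l=1..N. Mr l * (v l - v i)) \<ge>
           - ((real N - 1) / real N) * (v i - \<alpha>) + (1 / real N) * Mr j * (v j - \<alpha>)"
proof -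
  have Npos: "real N > 0" using N1 by simp
  define A where "A = {1..N} - {i}"
  have jA: "j \<in> A" using j ij by (simp add: A_def)
  have split: "(\<Sum>l\<in>A. Mr l * (v l - v i)) = (\<Sum>l\<in>A. Mr l * (v l - \<alpha>)) - (\<Sum>l\<in>A. Mr l * (v i - \<alpha>))"
    by (simp add: sum_subtractf[symmetric] algebra_simps)
  have s1: "Mr j * (v j - \<alpha>) \<le> (\<Sum>l\<in>A. Mr l * (v l - \<alpha>))"
    by (rule member_le_sum[OF jA]) (use Mb va in \<open>auto simp: A_def\<close>)
  have "(\<Sum>l\<in>A. Mr l * (v i - \<alpha>)) \<le> (\<Sum>l\<in>A. v i - \<alpha>)"
  proof (rule sum_mono)
    fix l assume l: "l \<in> A"
    have "(1 - Mr l) * (v i - \<alpha>) \<ge> 0" using Mb[of l] va[OF i] l by (auto simp: A_def)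
    thus "Mr l * (v i - \<alpha>) \<le> v i - \<alpha>" by (simp add: algebra_simps)
  qed
  hence s2: "(\<Sum>l\<in>A. Mr l * (v i - \<alpha>)) \<le> (real N - 1) * (v i - \<alpha>)"
    using card_minus1[OF i] by (simp add: A_def)
  have S: "Mr j * (v j - \<alpha>) - (real N - 1) * (v i - \<alpha>) \<le> (\<Sum>l=1..N. Mr l * (v l - v i))"
    using sum_drop_self[OF i, of Mr v] split s1 s2 by (simp add: A_def)
  have "- ((real N - 1) / real N) * (v i - \<alpha>) + (1 / real N) * Mr j * (v j - \<alpha>)
     = (1 / real N) * (Mr j * (v j - \<alpha>) - (real N - 1) * (v i - \<alpha>))"
    using Npos by (simp add: field_simps)
  also have "\<dots> \<le> (1 / real N) * (\<Sum>l=1..N. Mr l * (v l - v i))"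
    using S Npos by (intro mult_left_mono) auto
  finally show ?thesis .
qed

lemma Min_cont:
  fixes f :: "nat \<Rightarrow> real \<Rightarrow> real"
  assumes "finite A" "A \<noteq> {}" "\<And>j. j \<in> A \<Longrightarrow> continuous_on S (f j)"
  shows "continuous_on S (\<lambda>t. Min ((\<lambda>j. f j t) ` A))"
  using assms
proof (induction A rule: finite_ne_induct)
  case (singleton x) thus ?case by simp
next
  case (insert x F)
  have c: "continuous_on S (\<lambda>t. min (f x t) (Min ((\<lambda>j. f j t) ` F)))"
    using insert by (intro continuous_on_min) auto
  have e: "(\<lambda>t. Min ((\<lambda>j. f j t) ` insert x F)) = (\<lambda>t. min (f x t) (Min ((\<lambda>j. f j t) ` F)))"
    using insert by (auto simp: Min_insert)
  show ?case by (subst e) (rule c)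
qed


theorem proposition6:
  fixes N :: nat and T \<mu> :: real
    and M :: "nat \<Rightarrow> nat \<Rightarrow> real \<Rightarrow> real"
    and x :: "nat \<Rightarrow> real \<Rightarrow> real"
    and k :: nat and p :: "nat \<Rightarrow> nat"
  assumes N2: "N \<ge> 2" and Tpos: "T > 0" and mupos: "\<mu> > 0"
    and Mmeas: "\<And>i j. i \<in> {1..N} \<Longrightarrow> j \<in> {1..N} \<Longrightarrow> M i j \<in> borel_measurable (lebesgue_on {0..})"
    and Mrange: "\<And>i j s. i \<in> {1..N} \<Longrightarrow> j \<in> {1..N} \<Longrightarrow> s \<ge> 0 \<Longrightarrow> 0 \<le> M i j s \<and> M i j s \<le> 1"
    and sol: "carath_solution N M x"
    and k1: "k \<ge> 1"
    and pnodes: "\<And>l. l \<le> k \<Longrightarrow> p l \<in> {1..N}"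
    and pdist: "inj_on p {0..k}"
    and parrows: "\<And>m l. m < k \<Longrightarrow> l < k \<Longrightarrow> conn_arrow T \<mu> M (real m * T) (p l) (p (Suc l))"
  shows "\<forall>t\<ge>real k * T. \<forall>l\<le>k.
           x (p l) t \<ge> Min ((\<lambda>j. x j 0) ` {1..N})
             + (\<mu> * T / (real N + \<mu> * T)) ^ k * exp (- 2 * ((real N - 1) / real N) * t)
               * (x (p k) 0 - Min ((\<lambda>j. x j 0) ` {1..N}))"
proof -
  have N1: "N \<ge> 1" using N2 by simp
  have Npos: "real N > 0" using N1 by simp
  define c where "c = (real N - 1) / real N"
  have c0: "c \<ge> 0" using N1 by (simp add: c_def)
  define \<alpha> where "\<alpha> = Min ((\<lambda>j. x j 0) ` {1..N})"
  define q where "q i r = (1 / real N) * (\<Sum>j=1..N. M i j r * (x j r - x i r))" for i r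
  have xint0: "(q i has_integral (x i t - x i 0)) {0..t}" if "i \<in> {1..N}" "t \<ge> 0" for i t
    using sol that unfolding carath_solution_def q_def by blast
  have xint: "(q i has_integral (x i t - x i s)) {s..t}"
    if i: "i \<in> {1..N}" and s: "0 \<le> s" "s \<le> t" for i s t
  proof -
    have qi: "q i integrable_on {0..t}" using xint0[OF i, of t] s by auto
    have "integral {0..s} (q i) + integral {s..t} (q i) = integral {0..t} (q i)"
      by (rule Henstock_Kurzweil_Integration.integral_combine[OF s qi])
    moreover have "integral {0..s} (q i) = x i s - x i 0" using xint0[OF i, of s] s by (simp add: integral_unique)
    moreover have "integral {0..t} (q i) = x i t - x i 0" using xint0[OF i, of t] s by (simp add: integral_unique)
    ultimately have "integral {s..t} (q i) = x i t - x i s" by simp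
    moreover have "q i integrable_on {s..t}" using integrable_subinterval_real[OF qi, of s t] s by simp
    ultimately show ?thesis using integrable_integral by metis
  qed
  have xcont: "\<exists>d>0. \<forall>r\<ge>0. \<bar>r - s\<bar> < d \<longrightarrow> \<bar>x i r - x i s\<bar> < e"
    if i: "i \<in> {1..N}" and s: "0 \<le> s" and e: "e > 0" for i s e
  proof -
    define b where "b = s + 1"
    have qi: "q i integrable_on {0..b}" using xint0[OF i, of b] s by (auto simp: b_def)
    have C: "continuous_on {0..b} (\<lambda>t. x i 0 + integral {0..t} (q i))"
      by (intro continuous_intros indefinite_integral_continuous_1 qi)
    have E: "x i 0 + integral {0..t} (q i) = x i t" if "t \<in> {0..b}" for t
    proof -
      have "integral {0..t} (q i) = x i t - x i 0"
        using xint0[OF i, of t] that by (intro integral_unique) auto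
      thus ?thesis by simp
    qed
    have cb: "continuous_on {0..b} (x i)"
      using continuous_on_cong[of "{0..b}" "{0..b}" "\<lambda>t. x i 0 + integral {0..t} (q i)" "x i"] C E
      by simp
    have sb: "s \<in> {0..b}" using s by (simp add: b_def)
    obtain d' where d': "d' > 0" "\<forall>r\<in>{0..b}. dist r s < d' \<longrightarrow> dist (x i r) (x i s) < e"
      using cb sb e unfolding continuous_on_iff by meson
    show ?thesis
    proof (intro exI[of _ "min d' 1"] conjI allI impI)
      show "min d' 1 > 0" using d' by simp
      fix r :: real assume r: "r \<ge> 0" "\<bar>r - s\<bar> < min d' 1"
      hence "r \<in> {0..b}" by (auto simp: b_def)
      thus "\<bar>x i r - x i s\<bar> < e" using d' r by (auto simp: dist_real_def)
    qed
  qed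
  have xcont_on: "continuous_on {a..b} (x i)" if i: "i \<in> {1..N}" and a: "a \<ge> 0" for i a b
  proof (rule cont_from_pt)
    fix s e :: real assume s: "a \<le> s" "s \<le> b" and e: "e > 0"
    then obtain d where "d > 0" "\<forall>r\<ge>0. \<bar>r - s\<bar> < d \<longrightarrow> \<bar>x i r - x i s\<bar> < e"
      using xcont[OF i, of s e] a by auto
    thus "\<exists>d>0. \<forall>r\<in>{a..b}. \<bar>r - s\<bar> < d \<longrightarrow> \<bar>x i r - x i s\<bar> < e"
      using a by (intro exI[of _ d]) auto
  qed
  define mm where "mm t = Min ((\<lambda>j. x j t) ` {1..N})" for t
  have mm_le: "mm t \<le> x j t" if "j \<in> {1..N}" for j t
    unfolding mm_def using that by (intro Min_le) auto
  have mm_in: "\<exists>j\<in>{1..N}. mm t = x j t" for t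
  proof -
    have "mm t \<in> (\<lambda>j. x j t) ` {1..N}" unfolding mm_def using N1 by (intro Min_in) auto
    thus ?thesis by auto
  qed
  have q_mm: "q j r \<ge> - c * (x j r - mm r)" if "j \<in> {1..N}" "r \<ge> 0" for j r
    using qlow1[OF N1 that(1), of "\<lambda>l. M j l r" "\<lambda>l. x l r"] Mrange that
    unfolding q_def mm_def c_def by auto
  have mm_mono: "mm 0 \<le> mm t" if t: "t \<ge> 0" for t
  proof (rule mono_local[OF t])
    show "continuous_on {0..t} mm" unfolding mm_def
      by (rule Min_cont) (use N1 xcont_on in auto)
  next
    fix s e :: real assume s0: "0 \<le> s" and st: "s < t" and e: "e > 0"
    define \<epsilon> where "\<epsilon> = e / (4 * c + 1)"
    have \<epsilon>0: "\<epsilon> > 0" using e c0 by (simp add: \<epsilon>_def)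
    have ce: "4 * c * \<epsilon> \<le> e"
    proof -
      have "4 * c * \<epsilon> = e * (4 * c) / (4 * c + 1)" using c0 by (simp add: \<epsilon>_def)
      also have "\<dots> \<le> e" using c0 e by (simp add: divide_le_eq)
      finally show ?thesis .
    qed
    have "\<forall>j\<in>{1..N}. eventually (\<lambda>\<tau>. \<forall>r. s \<le> r \<and> r \<le> \<tau> \<longrightarrow> \<bar>x j r - x j s\<bar> < \<epsilon>) (at_right s)"
    proof
      fix j assume j: "j \<in> {1..N}"
      obtain d where d: "d > 0" "\<forall>r\<ge>0. \<bar>r - s\<bar> < d \<longrightarrow> \<bar>x j r - x j s\<bar> < \<epsilon>"
        using xcont[OF j s0 \<epsilon>0] by blast
      show "eventually (\<lambda>\<tau>. \<forall>r. s \<le> r \<and> r \<le> \<tau> \<longrightarrow> \<bar>x j r - x j s\<bar> < \<epsilon>) (at_right s)"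
        unfolding eventually_at_right_field
        by (rule exI[of _ "s + d"]) (use d s0 in auto)
    qed
    hence ev1: "eventually (\<lambda>\<tau>. \<forall>j\<in>{1..N}. \<forall>r. s \<le> r \<and> r \<le> \<tau> \<longrightarrow> \<bar>x j r - x j s\<bar> < \<epsilon>) (at_right s)"
      by (intro eventually_ball_finite) auto
    have ev2: "eventually (\<lambda>\<tau>. \<tau> > s) (at_right s)" by (simp add: eventually_at_right_less)
    show "eventually (\<lambda>\<tau>. \<tau> \<le> t \<longrightarrow> mm s - e * (\<tau> - s) \<le> mm \<tau>) (at_right s)"
      using ev1 ev2
    proof eventually_elim
      case (elim \<tau>)
      obtain j where j: "j \<in> {1..N}" and mj: "mm \<tau> = x j \<tau>" using mm_in by blast
      have low: "q j r \<ge> - (4 * c * \<epsilon>)" if r: "r \<in> {s..\<tau>}" for r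
      proof -
        obtain l where l: "l \<in> {1..N}" and ml: "mm r = x l r" using mm_in by blast
        have "x j \<tau> \<le> x l \<tau>" using mj mm_le[OF l, of \<tau>] by simp
        moreover have "\<bar>x j r - x j s\<bar> < \<epsilon>" "\<bar>x j \<tau> - x j s\<bar> < \<epsilon>"
          "\<bar>x l r - x l s\<bar> < \<epsilon>" "\<bar>x l \<tau> - x l s\<bar> < \<epsilon>"
          using elim j l r by auto
        ultimately have "x j r - mm r \<le> 4 * \<epsilon>" using ml by linarith
        hence "c * (x j r - mm r) \<le> c * (4 * \<epsilon>)" using c0 by (rule mult_left_mono)
        moreover have "q j r \<ge> - c * (x j r - mm r)" using q_mm[OF j] r s0 by auto
        ultimately show ?thesis by simp
      qed
      have "(- (4 * c * \<epsilon>)) * (\<tau> - s) \<le> x j \<tau> - x j s"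
        using has_integral_le[OF has_integral_const_real[of "- (4 * c * \<epsilon>)" s \<tau>] xint[OF j s0, of \<tau>]] low elim
        by (auto simp: algebra_simps)
      moreover have "mm s \<le> x j s" by (rule mm_le[OF j])
      moreover have "(4 * c * \<epsilon>) * (\<tau> - s) \<le> e * (\<tau> - s)" using ce elim by (intro mult_right_mono) auto
      ultimately show ?case using mj by (simp add: algebra_simps)
    qed
  qed
  have mm0: "mm 0 = \<alpha>" by (simp add: mm_def \<alpha>_def)
  have nonneg: "x i t \<ge> \<alpha>" if "i \<in> {1..N}" "t \<ge> 0" for i t
    using mm_le[OF that(1), of t] mm_mono[OF that(2)] mm0 by simp

  have zmono: "exp (c * t) * (x i t - \<alpha>) \<ge> exp (c * s) * (x i s - \<alpha>)"
    if i: "i \<in> {1..N}" and s: "0 \<le> s" "s \<le> t" for i s t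
  proof -
    define j where "j = (if i = 1 then 2 else (1::nat))"
    have j: "j \<in> {1..N}" "i \<noteq> j" using N2 by (auto simp: j_def)
    have "exp (c * t) * (x i t - \<alpha>) \<ge> exp (c * s) * (x i s - \<alpha>) + exp (c * s) * integral {s..t} (\<lambda>r. 0)"
    proof (rule comparison[OF s(2) c0])
      fix s' t' assume "s \<le> s'" "s' \<le> t'" "t' \<le> t"
      thus "(q i has_integral ((x i t' - \<alpha>) - (x i s' - \<alpha>))) {s'..t'}"
        using xint[OF i, of s' t'] s by simp
    next
      fix s' e :: real assume "s \<le> s'" "s' \<le> t" "e > 0"
      then obtain d where "d > 0" "\<forall>r\<ge>0. \<bar>r - s'\<bar> < d \<longrightarrow> \<bar>x i r - x i s'\<bar> < e"
        using xcont[OF i, of s' e] s by auto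
      thus "\<exists>d>0. \<forall>r\<in>{s..t}. \<bar>r - s'\<bar> < d \<longrightarrow> \<bar>(x i r - \<alpha>) - (x i s' - \<alpha>)\<bar> < e"
        using s by (intro exI[of _ d]) auto
    next
      fix r assume "s \<le> r" "r \<le> t"
      thus "x i r - \<alpha> \<ge> 0" using nonneg[OF i, of r] s by simp
    next
      show "(\<lambda>r. 0::real) integrable_on {s..t}" by (rule integrable_0)
    next
      fix r :: real assume "s \<le> r" "r \<le> t"
      thus "(0::real) \<le> 0" by simp
    next
      fix r assume r: "s \<le> r" "r \<le> t"
      have "q i r \<ge> - c * (x i r - \<alpha>) + (1 / real N) * M i j r * (x j r - \<alpha>)"
        using qlow2[OF N1 i j(1) j(2), where Mr = "\<lambda>l. M i l r" and v = "\<lambda>l. x l r" and \<alpha> = \<alpha>] Mrange[OF i] nonneg r s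
        unfolding q_def c_def by auto
      moreover have "(1 / real N) * M i j r * (x j r - \<alpha>) \<ge> 0"
        using Mrange[OF i j(1), of r] nonneg[OF j(1), of r] r s Npos by simp
      ultimately show "q i r \<ge> - c * (x i r - \<alpha>) + 0" by simp
    qed
    thus ?thesis by simp
  qed
  define \<beta> where "\<beta> = \<mu> * T / real N * exp (- c * T)"
  have \<beta>0: "\<beta> \<ge> 0" using mupos Tpos Npos by (simp add: \<beta>_def)
  have boost: "exp (c * (real m * T + T)) * (x (p l) (real m * T + T) - \<alpha>)
      \<ge> \<beta> * (exp (c * (real m * T)) * (x (p (Suc l)) (real m * T) - \<alpha>))"
    if m: "m < k" and l: "l < k" for m l
  proof -
    define a where "a = real m * T"
    define b where "b = a + T"
    define i where "i = p l"
    define j where "j = p (Suc l)"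
    have a0: "a \<ge> 0" using Tpos by (simp add: a_def)
    have ab: "a \<le> b" using Tpos by (simp add: b_def)
    have i: "i \<in> {1..N}" using pnodes l by (simp add: i_def)
    have j: "j \<in> {1..N}" using pnodes l by (simp add: j_def)
    have ij: "i \<noteq> j" using pdist l unfolding i_def j_def inj_on_def
      by (metis Suc_leI atLeastAtMost_iff le0 less_imp_le_nat n_not_Suc_n)
    define Z where "Z = exp (c * a) * (x j a - \<alpha>)"
    have Z0: "Z \<ge> 0" using nonneg[OF j a0] by (simp add: Z_def)
    have arr: "(1 / T) * integral {a..b} (M i j) \<ge> \<mu>"
      using parrows[OF m l] unfolding conn_arrow_def a_def b_def i_def j_def by simp
    have IM: "integral {a..b} (M i j) \<ge> \<mu> * T"
    proof -
      have "\<mu> * T \<le> ((1 / T) * integral {a..b} (M i j)) * T" using arr Tpos by (intro mult_right_mono) auto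
      thus ?thesis using Tpos by simp
    qed
    have Mint: "M i j integrable_on {a..b}"
    proof (rule ccontr)
      assume "\<not> ?thesis"
      hence "integral {a..b} (M i j) = 0" by (rule not_integrable_integral)
      moreover have "\<mu> * T > 0" using mupos Tpos by simp
      ultimately show False using IM by simp
    qed
    define K where "K = exp (- c * b) * Z / real N"
    have K0: "K \<ge> 0" using Z0 Npos by (simp add: K_def)
    have cmp: "exp (c * b) * (x i b - \<alpha>) \<ge> exp (c * a) * (x i a - \<alpha>) + exp (c * a) * integral {a..b} (\<lambda>r. K * M i j r)"
    proof (rule comparison[OF ab c0])
      fix s' t' assume "a \<le> s'" "s' \<le> t'" "t' \<le> b"
      thus "(q i has_integral ((x i t' - \<alpha>) - (x i s' - \<alpha>))) {s'..t'}"
        using xint[OF i, of s' t'] a0 by simp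
    next
      fix s' e :: real assume "a \<le> s'" "s' \<le> b" "e > 0"
      then obtain d where "d > 0" "\<forall>r\<ge>0. \<bar>r - s'\<bar> < d \<longrightarrow> \<bar>x i r - x i s'\<bar> < e"
        using xcont[OF i, of s' e] a0 by auto
      thus "\<exists>d>0. \<forall>r\<in>{a..b}. \<bar>r - s'\<bar> < d \<longrightarrow> \<bar>(x i r - \<alpha>) - (x i s' - \<alpha>)\<bar> < e"
        using a0 by (intro exI[of _ d]) auto
    next
      fix r assume "a \<le> r" "r \<le> b"
      thus "x i r - \<alpha> \<ge> 0" using nonneg[OF i, of r] a0 by simp
    next
      show "(\<lambda>r. K * M i j r) integrable_on {a..b}" by (rule integrable_on_mult_right[OF Mint])
    next
      fix r :: real assume "a \<le> r" "r \<le> b"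
      thus "K * M i j r \<ge> 0" using K0 Mrange[OF i j, of r] a0 by simp
    next
      fix r assume r: "a \<le> r" "r \<le> b"
      have q1: "q i r \<ge> - c * (x i r - \<alpha>) + (1 / real N) * M i j r * (x j r - \<alpha>)"
        using qlow2[OF N1 i j ij, where Mr = "\<lambda>l. M i l r" and v = "\<lambda>l. x l r" and \<alpha> = \<alpha>] Mrange[OF i] nonneg r a0
        unfolding q_def c_def by auto
      have "exp (c * r) * (x j r - \<alpha>) \<ge> Z" unfolding Z_def using zmono[OF j a0 r(1)] .
      hence "x j r - \<alpha> \<ge> exp (- c * r) * Z"
        by (simp add: exp_minus field_simps)
      moreover have "exp (- c * r) \<ge> exp (- c * b)"
      proof -
        have "c * r \<le> c * b" using r c0 by (intro mult_left_mono) auto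
        thus ?thesis by simp
      qed
      ultimately have "x j r - \<alpha> \<ge> exp (- c * b) * Z" using Z0
        by (meson mult_right_mono order_trans)
      hence "(1 / real N) * M i j r * (x j r - \<alpha>) \<ge> (1 / real N) * M i j r * (exp (- c * b) * Z)"
        using Mrange[OF i j, of r] r a0 Npos by (intro mult_left_mono) auto
      also have "(1 / real N) * M i j r * (exp (- c * b) * Z) = K * M i j r" by (simp add: K_def)
      finally show "q i r \<ge> - c * (x i r - \<alpha>) + K * M i j r" using q1 by simp
    qed
    have "integral {a..b} (\<lambda>r. K * M i j r) = K * integral {a..b} (M i j)"
      by (rule integral_unique, rule has_integral_mult_right, rule integrable_integral[OF Mint])
    moreover have "exp (c * a) * (x i a - \<alpha>) \<ge> 0" using nonneg[OF i a0] by simp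
    ultimately have "exp (c * b) * (x i b - \<alpha>) \<ge> exp (c * a) * (K * integral {a..b} (M i j))"
      using cmp by simp
    moreover have "exp (c * a) * (K * integral {a..b} (M i j)) \<ge> exp (c * a) * (K * (\<mu> * T))"
      using IM K0 by (intro mult_left_mono) auto
    moreover have "exp (c * a) * (K * (\<mu> * T)) = \<beta> * Z"
    proof -
      have "exp (c * a) * exp (- c * b) = exp (- c * T)"
        by (simp add: b_def exp_add[symmetric] algebra_simps)
      have "exp (c * a) * (K * (\<mu> * T)) = (exp (c * a) * exp (- c * b)) * (\<mu> * T / real N) * Z"
        unfolding K_def by (simp add: algebra_simps)
      thus ?thesis unfolding \<beta>_def using \<open>exp (c * a) * exp (- c * b) = exp (- c * T)\<close>
        by (simp add: algebra_simps)
    qed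
    ultimately have "exp (c * b) * (x i b - \<alpha>) \<ge> \<beta> * Z" by linarith
    thus ?thesis by (simp only: Z_def a_def b_def i_def j_def)
  qed
  define Z0 where "Z0 = x (p k) 0 - \<alpha>"
  have Z00: "Z0 \<ge> 0" using nonneg[OF pnodes[of k]] by (simp add: Z0_def)
  have chain: "\<forall>t. real d * T \<le> t \<longrightarrow> exp (c * t) * (x (p (k - d)) t - \<alpha>) \<ge> \<beta> ^ d * Z0"
    if "d \<le> k" for d
    using that
  proof (induction d)
    case 0
    show ?case
    proof (intro allI impI)
      fix t :: real assume "real 0 * T \<le> t"
      hence "t \<ge> 0" by simp
      thus "exp (c * t) * (x (p (k - 0)) t - \<alpha>) \<ge> \<beta> ^ 0 * Z0"
        using zmono[OF pnodes[of k], of 0 t] by (simp add: Z0_def)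
    qed
  next
    case (Suc d)
    define l where "l = k - Suc d"
    have lk: "l < k" and dk: "d < k" and Sl: "Suc l = k - d" using Suc.prems by (auto simp: l_def)
    have IH: "exp (c * (real d * T)) * (x (p (k - d)) (real d * T) - \<alpha>) \<ge> \<beta> ^ d * Z0"
      using Suc.IH Suc.prems by simp
    show ?case
    proof (intro allI impI)
      fix t :: real assume t: "real (Suc d) * T \<le> t"
      have s0: "0 \<le> real d * T + T" using Tpos by simp
      have st: "real d * T + T \<le> t" using t by (simp add: algebra_simps)
      have "exp (c * t) * (x (p l) t - \<alpha>) \<ge> exp (c * (real d * T + T)) * (x (p l) (real d * T + T) - \<alpha>)"
        by (rule zmono[OF pnodes s0 st]) (use lk in simp)
      moreover have "exp (c * (real d * T + T)) * (x (p l) (real d * T + T) - \<alpha>)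
          \<ge> \<beta> * (exp (c * (real d * T)) * (x (p (Suc l)) (real d * T) - \<alpha>))"
        by (rule boost[OF dk lk])
      moreover have "\<beta> * (exp (c * (real d * T)) * (x (p (Suc l)) (real d * T) - \<alpha>)) \<ge> \<beta> * (\<beta> ^ d * Z0)"
        using IH Sl \<beta>0 by (intro mult_left_mono) auto
      ultimately show "exp (c * t) * (x (p (k - Suc d)) t - \<alpha>) \<ge> \<beta> ^ Suc d * Z0"
        unfolding l_def by simp
    qed
  qed
  define \<eta> where "\<eta> = \<mu> * T / (real N + \<mu> * T)"
  have den: "real N + \<mu> * T > 0" using mupos Tpos Npos by (simp add: add_pos_pos)
  have \<eta>0: "\<eta> \<ge> 0" using mupos Tpos den by (simp add: \<eta>_def)
  have \<eta>1: "\<eta> \<le> 1" using den Npos by (simp add: \<eta>_def divide_le_eq)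
  have \<eta>2: "\<eta> \<le> \<mu> * T / real N" unfolding \<eta>_def using mupos Tpos Npos den
    by (intro divide_left_mono) (auto intro: mult_pos_pos)
  have final: "x (p l) t \<ge> \<alpha> + \<eta> ^ k * exp (- 2 * c * t) * Z0"
    if t: "t \<ge> real k * T" and l: "l \<le> k" for t l
  proof -
    define d where "d = k - l"
    have dk: "d \<le> k" and pl: "p (k - d) = p l" using l by (auto simp: d_def)
    have dt: "real d * T \<le> t" using t dk Tpos
      by (meson mult_right_mono of_nat_le_iff order_trans less_imp_le)
    have E: "exp (c * t) * (x (p l) t - \<alpha>) \<ge> \<beta> ^ d * Z0" using chain[OF dk] dt pl by auto
    have "\<beta> ^ d = ((\<mu> * T / real N) * exp (- c * T)) ^ d" by (simp add: \<beta>_def)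
    also have "\<dots> = (\<mu> * T / real N) ^ d * exp (- c * T) ^ d" by (rule power_mult_distrib)
    also have "exp (- c * T) ^ d = exp (- c * (real d * T))"
      by (simp add: exp_of_nat_mult[symmetric] algebra_simps)
    finally have bd: "\<beta> ^ d = (\<mu> * T / real N) ^ d * exp (- c * (real d * T))" .
    have "c * (real d * T) \<le> c * t" using dt c0 by (intro mult_left_mono) auto
    hence e1: "exp (- c * (real d * T)) \<ge> exp (- c * t)" by simp
    have p1: "\<eta> ^ k \<le> \<eta> ^ d" by (rule power_decreasing[OF dk \<eta>0 \<eta>1])
    have p2: "\<eta> ^ d \<le> (\<mu> * T / real N) ^ d" by (rule power_mono[OF \<eta>2 \<eta>0])
    have "\<eta> ^ k * exp (- c * t) \<le> \<beta> ^ d" unfolding bd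
      using p1 p2 e1 \<eta>0 mupos Tpos Npos by (intro mult_mono) auto
    hence "\<eta> ^ k * exp (- c * t) * Z0 \<le> \<beta> ^ d * Z0" using Z00 by (rule mult_right_mono)
    hence "\<eta> ^ k * exp (- c * t) * Z0 \<le> exp (c * t) * (x (p l) t - \<alpha>)" using E by simp
    hence "exp (- c * t) * (\<eta> ^ k * exp (- c * t) * Z0) \<le> exp (- c * t) * (exp (c * t) * (x (p l) t - \<alpha>))"
      by (rule mult_left_mono) simp
    moreover have "exp (- c * t) * (exp (c * t) * (x (p l) t - \<alpha>)) = x (p l) t - \<alpha>"
      by (simp add: exp_minus field_simps)
    moreover have "exp (- c * t) * (\<eta> ^ k * exp (- c * t) * Z0) = \<eta> ^ k * exp (- 2 * c * t) * Z0"
    proof -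
      have "exp (- c * t) * exp (- c * t) = exp (- c * t + - c * t)" by (rule exp_add[symmetric])
      also have "- c * t + - c * t = - 2 * c * t" by simp
      finally have X: "exp (- 2 * c * t) = exp (- c * t) * exp (- c * t)" by simp
      show ?thesis unfolding X by (simp only: ac_simps)
    qed
    ultimately show ?thesis by linarith
  qed
  show ?thesis
    using final unfolding \<alpha>_def c_def \<eta>_def Z0_def by blast
qed

end
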